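(* Let $\epsilon\in(0,1]$ and $p \in (0,1)$ be constants and let $\xi>0$ be an arbitrary constant. Consider $\mathrm{USD}_p$ started from a configuration $\mathbf{x}(0)=(x_1(0),x_2(0),u(0))$ with $x_1(0)\in[\epsilon n, x_2(0)]$, $u(0)\le n/2$, and $|\Delta_w(0)| < \xi\sqrt{n\log n}$. Let $T_w := \inf\{t \geq 0 : |\Delta_w(t)| \geq \xi\sqrt{n\log n}\}$. Then with high probability $T_w = O(n\log^2 n)$.
   Context: Population protocol with $n$ agents, each in a state from $\{1,2,\bot\}$ (Opinion 1, Opinion 2, undecided). At each time step a scheduler picks an ordered pair $(i,j)$ of agents uniformly at random, independently of the past; only the initiator $i$ changes state. In $\mathrm{USD}_p$: if the initiator is $2$ and the responder $1$, the initiator becomes $\bot$; if the initiator is $1$ and the responder $2$, the initiator becomes $\bot$ with probability $1-p$ and otherwise stays $1$; if the initiator is $\bot$, it adopts the responder's state; otherwise nothing changes. $x_1(t),x_2(t),u(t)$ are the numbers of agents in states $1,2,\bot$ after $t$ interactions. The weighted bias is $\Delta_w(t) := x_1(t) - (1-p)x_2(t)$. "With high probability" means with probability at least $1-n^{-c}$ for a constant $c>0$. *)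

theory Defs
  imports "HOL-Probability.Probability"
begin

datatype opinion = Op1 | Op2 | Und

text \<open>A configuration assigns a state to each agent; agents are 0,...,n-1.\<close>
type_synonym config = "nat \<Rightarrow> opinion"

definition cnt :: "nat \<Rightarrow> opinion \<Rightarrow> config \<Rightarrow> nat" where
  "cnt n a s = card {i \<in> {0..<n}. s i = a}"

abbreviation x1 :: "nat \<Rightarrow> config \<Rightarrow> nat" where "x1 n s \<equiv> cnt n Op1 s"
abbreviation x2 :: "nat \<Rightarrow> config \<Rightarrow> nat" where "x2 n s \<equiv> cnt n Op2 s"
abbreviation und :: "nat \<Rightarrow> config \<Rightarrow> nat" where "und n s \<equiv> cnt n Und s"

definition delta_w :: "nat \<Rightarrow> real \<Rightarrow> config \<Rightarrow> real" where
  "delta_w n p s = real (x1 n s) - (1 - p) * real (x2 n s)"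

definition interact :: "real \<Rightarrow> config \<Rightarrow> nat \<Rightarrow> nat \<Rightarrow> config pmf" where
  "interact p s i j =
     (if s i = Op2 \<and> s j = Op1 then return_pmf (s(i := Und))
      else if s i = Op1 \<and> s j = Op2 then
        map_pmf (\<lambda>b. if b then s(i := Und) else s) (bernoulli_pmf (1 - p))
      else if s i = Und then return_pmf (s(i := s j))
      else return_pmf s)"

definition usd_step :: "nat \<Rightarrow> real \<Rightarrow> config \<Rightarrow> config pmf" where
  "usd_step n p s =
     bind_pmf (pmf_of_set {(i, j). i < n \<and> j < n \<and> i \<noteq> j}) (\<lambda>(i, j). interact p s i j)"

definition stopped :: "config set \<Rightarrow> (config \<Rightarrow> config pmf) \<Rightarrow> config \<Rightarrow> config pmf" where
  "stopped S K s = (if s \<in> S then return_pmf s else K s)"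

definition run :: "(config \<Rightarrow> config pmf) \<Rightarrow> nat \<Rightarrow> config \<Rightarrow> config pmf" where
  "run K t s = ((\<lambda>\<mu>. bind_pmf \<mu> K) ^^ t) (return_pmf s)"

definition hit_set :: "nat \<Rightarrow> real \<Rightarrow> real \<Rightarrow> config set" where
  "hit_set n p \<xi> = {s. \<bar>delta_w n p s\<bar> \<ge> \<xi> * sqrt (real n * ln (real n))}"

text \<open>P(T_w > t) from start s: probability that the chain stopped at hit_set is not
  in hit_set after t steps, i.e. has not hit it at any time 0..t.\<close>
definition prob_not_hit :: "nat \<Rightarrow> real \<Rightarrow> real \<Rightarrow> nat \<Rightarrow> config \<Rightarrow> real" where
  "prob_not_hit n p \<xi> t s =
     measure_pmf.prob (run (stopped (hit_set n p \<xi>) (usd_step n p)) t s) (- hit_set n p \<xi>)"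

end

theory Submission
  imports Defs "HOL-Analysis.Harmonic_Numbers"
begin

lemma run_Suc: "run K (Suc t) s = bind_pmf (run K t s) K"
  by (simp add: run_def)

lemma run_0: "run K 0 s = return_pmf s"
  by (simp add: run_def)

lemma run_add: "run K (a + b) s = bind_pmf (run K a s) (run K b)"
proof (induction b)
  case 0
  then show ?case by (simp add: run_0 bind_return_pmf')
next
  case (Suc b)
  have "run K (a + Suc b) s = bind_pmf (run K (a + b) s) K" by (simp add: run_Suc)
  also have "\<dots> = bind_pmf (run K a s) (\<lambda>x. bind_pmf (run K b x) K)"
    by (simp add: Suc bind_assoc_pmf)
  also have "(\<lambda>x. bind_pmf (run K b x) K) = run K (Suc b)" by (simp add: fun_eq_iff run_Suc)
  finally show ?case .
qed

lemma run_finite: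
  assumes "\<And>s. finite (set_pmf (K s))"
  shows "finite (set_pmf (run K t s))"
  by (induction t) (auto simp: run_0 run_Suc assms)

lemma run_inv:
  assumes "\<And>s. s \<in> I \<Longrightarrow> set_pmf (K s) \<subseteq> I" "s \<in> I"
  shows "set_pmf (run K t s) \<subseteq> I"
  using assms by (induction t) (auto simp: run_0 run_Suc)

lemma run_absorb:
  assumes "K s = return_pmf s"
  shows "run K t s = return_pmf s"
  using assms by (induction t) (auto simp: run_0 run_Suc bind_return_pmf)

lemma exp_bind_fin:
  fixes h :: "'b \<Rightarrow> real"
  assumes "finite (set_pmf p)" "\<And>x. x \<in> set_pmf p \<Longrightarrow> finite (set_pmf (f x))"
  shows "measure_pmf.expectation (bind_pmf p f) h =
         measure_pmf.expectation p (\<lambda>x. measure_pmf.expectation (f x) h)"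
  using assms by (subst pmf_expectation_bind[of "set_pmf p"]) (auto simp: integral_measure_pmf[of "set_pmf p"])

lemma exp_mono_fin:
  fixes f g :: "'a \<Rightarrow> real"
  assumes "finite (set_pmf p)" "\<And>x. x \<in> set_pmf p \<Longrightarrow> f x \<le> g x"
  shows "measure_pmf.expectation p f \<le> measure_pmf.expectation p g"
  using assms by (auto simp: integral_measure_pmf[of "set_pmf p"] intro!: sum_mono mult_left_mono)

lemma prob_as_exp:
  "measure_pmf.prob p A = measure_pmf.expectation p (indicator A :: _ \<Rightarrow> real)"
  by simp

lemma exp_add_fin:
  fixes f g :: "'a \<Rightarrow> real"
  assumes "finite (set_pmf p)"
  shows "measure_pmf.expectation p (\<lambda>x. f x + c * g x) =
         measure_pmf.expectation p f + c * measure_pmf.expectation p g"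
proof -
  have i1: "integrable (measure_pmf p) f" "integrable (measure_pmf p) g"
    using assms by (auto intro: integrable_measure_pmf_finite)
  then show ?thesis by simp
qed

locale chain =
  fixes K :: "config \<Rightarrow> config pmf" and I H :: "config set"
  assumes fin: "\<And>s. finite (set_pmf (K s))"
    and inv: "\<And>s. s \<in> I \<Longrightarrow> set_pmf (K s) \<subseteq> I"
    and absorb: "\<And>s. s \<in> H \<Longrightarrow> K s = return_pmf s"
begin

lemma step_prob_le: "measure_pmf.prob (K x) (-H) \<le> indicator (-H) x"
  by (cases "x \<in> H") (auto simp: absorb)

lemma P_mono_Suc:
  "measure_pmf.prob (run K (Suc k) s) (-H) \<le> measure_pmf.prob (run K k s) (-H)"
proof -
  have "measure_pmf.prob (run K (Suc k) s) (-H) =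
     measure_pmf.expectation (run K k s) (\<lambda>x. measure_pmf.expectation (K x) (indicator (-H)))"
    unfolding prob_as_exp run_Suc
    by (rule exp_bind_fin) (auto simp: run_finite fin)
  also have "\<dots> \<le> measure_pmf.expectation (run K k s) (indicator (-H))"
    apply (rule exp_mono_fin)
     apply (simp add: run_finite fin)
    using step_prob_le by simp
  finally show ?thesis by simp
qed

lemma P_mono:
  assumes "j \<le> k"
  shows "measure_pmf.prob (run K k s) (-H) \<le> measure_pmf.prob (run K j s) (-H)"
  using assms
proof (induction k)
  case 0 then show ?case by simp
next
  case (Suc k)
  show ?case
  proof (cases "j = Suc k")
    case False
    then have "j \<le> k" using Suc.prems by simp
    then show ?thesis using Suc.IH P_mono_Suc order_trans by blast
  qed simp
qed

lemma drift_bound: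
  fixes \<Phi> :: "config \<Rightarrow> real"
  assumes bnd: "\<And>s. s \<in> I \<Longrightarrow> 0 \<le> \<Phi> s \<and> \<Phi> s \<le> B"
    and drift: "\<And>s. s \<in> I \<Longrightarrow> s \<notin> H \<Longrightarrow> measure_pmf.expectation (K s) \<Phi> \<ge> \<Phi> s + \<delta>"
    and dpos: "\<delta> > 0" and sI: "s \<in> I"
  shows "real t * \<delta> * measure_pmf.prob (run K t s) (-H) \<le> B"
proof -
  define P where "P k = measure_pmf.prob (run K k s) (-H)" for k
  have key: "measure_pmf.expectation (run K k s) \<Phi> \<ge> \<Phi> s + \<delta> * (\<Sum>j<k. P j)" for k
  proof (induction k)
    case 0 then show ?case by (simp add: run_0)
  next
    case (Suc k)
    have finr: "finite (set_pmf (run K k s))" by (simp add: run_finite fin)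
    have "measure_pmf.expectation (run K (Suc k) s) \<Phi> =
       measure_pmf.expectation (run K k s) (\<lambda>x. measure_pmf.expectation (K x) \<Phi>)"
      unfolding run_Suc by (rule exp_bind_fin) (auto simp: finr fin)
    also have "\<dots> \<ge> measure_pmf.expectation (run K k s) (\<lambda>x. \<Phi> x + \<delta> * indicator (-H) x)"
    proof (rule exp_mono_fin[OF finr])
      fix x assume "x \<in> set_pmf (run K k s)"
      then have "x \<in> I" using run_inv[of I K s k] inv sI by auto
      then show "\<Phi> x + \<delta> * indicator (- H) x \<le> measure_pmf.expectation (K x) \<Phi>"
        using drift[of x] by (cases "x \<in> H") (auto simp: absorb)
    qed
    also have "measure_pmf.expectation (run K k s) (\<lambda>x. \<Phi> x + \<delta> * indicator (-H) x)
       = measure_pmf.expectation (run K k s) \<Phi> + \<delta> * P k"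
      by (subst exp_add_fin[OF finr]) (simp add: P_def)
    finally show ?case unfolding sum.lessThan_Suc distrib_left using Suc.IH by linarith
  qed
  have "real t * P t \<le> (\<Sum>j<t. P j)"
  proof -
    have "(\<Sum>j<t. P t) \<le> (\<Sum>j<t. P j)"
      by (rule sum_mono) (auto simp: P_def intro: P_mono)
    then show ?thesis by simp
  qed
  moreover have "measure_pmf.expectation (run K t s) \<Phi> \<le> B"
  proof -
    have "measure_pmf.expectation (run K t s) \<Phi> \<le> measure_pmf.expectation (run K t s) (\<lambda>_. B)"
      by (rule exp_mono_fin) (use run_inv[of I K s t] inv sI bnd in \<open>auto simp: run_finite fin\<close>)
    then show ?thesis by simp
  qed
  moreover have "0 \<le> \<Phi> s" using bnd sI by auto
  ultimately have "\<delta> * (real t * P t) \<le> B"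
    using key[of t] dpos by (smt (verit) mult_left_mono)
  then show ?thesis by (simp add: P_def mult_ac)
qed

lemma rounds:
  assumes half: "\<And>s. s \<in> I \<Longrightarrow> measure_pmf.prob (run K L s) (-H) \<le> 1/2"
  shows "s \<in> I \<Longrightarrow> measure_pmf.prob (run K (k * L) s) (-H) \<le> (1/2)^k"
proof (induction k arbitrary: s)
  case 0
  then show ?case by simp
next
  case (Suc k)
  have finr: "finite (set_pmf (run K L s))" by (simp add: run_finite fin)
  have "measure_pmf.prob (run K (Suc k * L) s) (-H) =
     measure_pmf.expectation (run K L s) (\<lambda>x. measure_pmf.expectation (run K (k * L) x) (indicator (-H)))"
    unfolding prob_as_exp by (simp only: mult_Suc run_add, rule exp_bind_fin) (auto simp: run_finite fin)
  also have "\<dots> \<le> measure_pmf.expectation (run K L s) (\<lambda>x. (1/2::real)^k * indicator (-H) x)"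
  proof (rule exp_mono_fin[OF finr])
    fix x assume "x \<in> set_pmf (run K L s)"
    then have "x \<in> I" using run_inv[of I K s L] inv Suc.prems by auto
    then show "measure_pmf.expectation (run K (k * L) x) (indicator (- H)) \<le> (1/2::real)^k * indicator (-H) x"
      using Suc.IH[of x] by (cases "x \<in> H") (auto simp: run_absorb absorb)
  qed
  also have "\<dots> = (1/2::real)^k * measure_pmf.prob (run K L s) (-H)"
    by simp
  also have "\<dots> \<le> (1/2::real)^k * (1/2)"
    using half[OF Suc.prems] by (intro mult_left_mono) auto
  finally show ?case by simp
qed

end

lemma cnt_sum: "cnt n c s = (\<Sum>k<n. if s k = c then 1 else 0)"
proof -
  have "cnt n c s = (\<Sum>k\<in>{k\<in>{..<n}. s k = c}. 1)"
    by (simp add: cnt_def lessThan_atLeast0)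
  also have "\<dots> = (\<Sum>k<n. if s k = c then 1 else 0)"
    by (subst sum.inter_filter) auto
  finally show ?thesis .
qed

lemma cnt_Suc: "cnt (Suc n) c s = cnt n c s + (if s n = c then 1 else 0)"
  by (simp add: cnt_sum)

lemma sum_split:
  fixes g :: "opinion \<Rightarrow> real"
  shows "(\<Sum>k<n. g (s k)) = real (x1 n s) * g Op1 + real (x2 n s) * g Op2 + real (und n s) * g Und"
proof (induction n)
  case 0 then show ?case by (simp add: cnt_sum)
next
  case (Suc n)
  then show ?case by (cases "s n") (auto simp: cnt_Suc algebra_simps)
qed

lemma cnt_total: "x1 n s + x2 n s + und n s = n"
proof -
  have "real (x1 n s) + real (x2 n s) + real (und n s) = real n"
    using sum_split[where g="\<lambda>_. 1" and n=n and s=s] by simp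
  then show ?thesis by linarith
qed

lemma cnt_upd:
  assumes "i < n"
  shows "real (cnt n c (s(i:=v))) = real (cnt n c s) - (if s i = c then 1 else 0) + (if v = c then 1 else 0)"
proof -
  have "real (cnt n c (s(i:=v))) = (\<Sum>k<n. if (s(i:=v)) k = c then 1 else 0)"
    by (auto simp: cnt_sum of_nat_sum intro!: sum.cong)
  also have "\<dots> = (if v = c then 1 else 0) + (\<Sum>k\<in>{..<n}-{i}. if s k = c then 1 else 0)"
    using assms by (subst sum.remove[of _ i]) auto
  also have "(\<Sum>k\<in>{..<n}-{i}. if s k = c then 1 else (0::real)) = real (cnt n c s) - (if s i = c then 1 else 0)"
    using assms by (auto simp: cnt_sum sum_diff1 of_nat_sum intro!: sum.cong)
  finally show ?thesis by linarith
qed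

lemma cnt_pos:
  assumes "i < n" "s i = c"
  shows "1 \<le> cnt n c s"
proof -
  have "i \<in> {k \<in> {0..<n}. s k = c}" using assms by auto
  then have "card {k \<in> {0..<n}. s k = c} > 0" by (intro card_gt_0_iff[THEN iffD2]) auto
  then show ?thesis by (simp add: cnt_def)
qed

lemma harm_down:
  assumes "real d' = real d - 1" "1 \<le> d"
  shows "harm d' = (harm d :: real) - 1 / real d"
proof -
  have "d = Suc d'" using assms by linarith
  then show ?thesis by (simp add: harm_Suc inverse_eq_divide)
qed

lemma harm_up:
  assumes "real d' = real d + 1"
  shows "harm d' = (harm d :: real) + 1 / (real d + 1)"
proof -
  have "d' = Suc d" using assms by linarith
  then show ?thesis by (simp add: harm_Suc field_simps)
qed

lemma harm_le_ln: "1 \<le> n \<Longrightarrow> harm n \<le> 1 + ln (real n)"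
proof (induction n)
  case 0 then show ?case by simp
next
  case (Suc n)
  show ?case
  proof (cases "n = 0")
    case True then show ?thesis by (simp add: harm_Suc harm_def)
  next
    case False
    have "1 / real (Suc n) \<le> ln (real (Suc n)) - ln (real n)"
    proof -
      have "ln (real n / real (Suc n)) \<le> real n / real (Suc n) - 1"
        using False by (intro ln_le_minus_one) auto
      moreover have "ln (real n / real (Suc n)) = ln (real n) - ln (real (Suc n))"
        using False by (simp add: ln_div)
      moreover have "real n / real (Suc n) - 1 = - (1 / real (Suc n))"
        by (simp add: field_simps)
      ultimately show ?thesis by linarith
    qed
    then show ?thesis using Suc False by (simp add: harm_Suc inverse_eq_divide)
  qed
qed

definition Phi :: "nat \<Rightarrow> real \<Rightarrow> real \<Rightarrow> config \<Rightarrow> real" where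
  "Phi n p A s = (delta_w n p s)^2 + A * real n * harm (x1 n s + x2 n s)"

definition hf :: "nat \<Rightarrow> real \<Rightarrow> real \<Rightarrow> config \<Rightarrow> opinion \<Rightarrow> opinion \<Rightarrow> real" where
  "hf n p A s \<alpha> \<beta> = (let D = delta_w n p s; d = real (x1 n s + x2 n s); q = 1 - p in
     if \<alpha> = Op2 \<and> \<beta> = Op1 then (D + q)^2 - D^2 - A * n / d
     else if \<alpha> = Op1 \<and> \<beta> = Op2 then q * ((D - 1)^2 - D^2 - A * n / d)
     else if \<alpha> = Und \<and> \<beta> = Op1 then (D + 1)^2 - D^2 + A * n / (d + 1)
     else if \<alpha> = Und \<and> \<beta> = Op2 then (D - q)^2 - D^2 + A * n / (d + 1)
     else 0)"

lemma Phi_down: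
  assumes "real (x1 n s') + real (x2 n s') = real (x1 n s) + real (x2 n s) - 1"
    "1 \<le> x1 n s + x2 n s"
  shows "Phi n p A s' = (delta_w n p s')^2 + A * real n * harm (x1 n s + x2 n s)
     - A * n / real (x1 n s + x2 n s)"
proof -
  have "harm (x1 n s' + x2 n s') = (harm (x1 n s + x2 n s) :: real) - 1 / real (x1 n s + x2 n s)"
    by (rule harm_down) (use assms in auto)
  then have "A * real n * harm (x1 n s' + x2 n s') = A * real n * harm (x1 n s + x2 n s) - A * n / real (x1 n s + x2 n s)"
    by (simp add: right_diff_distrib)
  then show ?thesis by (simp add: Phi_def)
qed

lemma Phi_up:
  assumes "real (x1 n s') + real (x2 n s') = real (x1 n s) + real (x2 n s) + 1"
  shows "Phi n p A s' = (delta_w n p s')^2 + A * real n * harm (x1 n s + x2 n s)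
     + A * n / (real (x1 n s + x2 n s) + 1)"
proof -
  have "harm (x1 n s' + x2 n s') = (harm (x1 n s + x2 n s) :: real) + 1 / (real (x1 n s + x2 n s) + 1)"
    by (rule harm_up) (use assms in auto)
  then have "A * real n * harm (x1 n s' + x2 n s') = A * real n * harm (x1 n s + x2 n s) + A * n / (real (x1 n s + x2 n s) + 1)"
    by (simp add: distrib_left)
  then show ?thesis by (simp add: Phi_def)
qed

lemma pair_exp:
  assumes "i < n" "j < n" "i \<noteq> j" "0 < p" "p < 1"
  shows "measure_pmf.expectation (interact p s i j) (Phi n p A) = Phi n p A s + hf n p A s (s i) (s j)"
proof -
  have u1: "real (x1 n (s(i:=v))) = real (x1 n s) - (if s i = Op1 then 1 else 0) + (if v = Op1 then 1 else 0)" for v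
    using cnt_upd[OF assms(1)] by blast
  have u2: "real (x2 n (s(i:=v))) = real (x2 n s) - (if s i = Op2 then 1 else 0) + (if v = Op2 then 1 else 0)" for v
    using cnt_upd[OF assms(1)] by blast
  define D where "D = delta_w n p s"
  define X where "X = A * real n * harm (x1 n s + x2 n s)"
  define Y where "Y = A * real n / real (x1 n s + x2 n s)"
  define Z where "Z = A * real n / (real (x1 n s + x2 n s) + 1)"
  have ps: "Phi n p A s = D^2 + X" by (simp add: Phi_def D_def X_def)
  have hfe: "hf n p A s \<alpha> \<beta> = (if \<alpha> = Op2 \<and> \<beta> = Op1 then (D + (1-p))^2 - D^2 - Y
     else if \<alpha> = Op1 \<and> \<beta> = Op2 then (1-p) * ((D - 1)^2 - D^2 - Y)
     else if \<alpha> = Und \<and> \<beta> = Op1 then (D + 1)^2 - D^2 + Z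
     else if \<alpha> = Und \<and> \<beta> = Op2 then (D - (1-p))^2 - D^2 + Z
     else 0)" for \<alpha> \<beta>
    unfolding hf_def Let_def D_def Y_def Z_def by simp
  show ?thesis
  proof (cases "s i")
    case Op1
    show ?thesis
    proof (cases "s j = Op2")
      case True
      have c1: "1 \<le> x1 n s" using cnt_pos[of i n s Op1, OF assms(1) Op1] .
      have e: "Phi n p A (s(i:=Und)) = (D - 1)^2 + X - Y"
        using Phi_down[of n "s(i:=Und)" s p A] u1[of Und] u2[of Und] Op1 c1
        by (simp add: delta_w_def algebra_simps D_def X_def Y_def)
      have "measure_pmf.expectation (interact p s i j) (Phi n p A) =
          Phi n p A (s(i:=Und)) * (1 - p) + Phi n p A s * p"
        using Op1 True assms by (simp add: interact_def)
      also have "\<dots> = ((D - 1)^2 + X - Y) * (1 - p) + (D^2 + X) * p" by (simp only: e ps)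
      also have "\<dots> = (D^2 + X) + (1-p) * ((D - 1)^2 - D^2 - Y)" by (simp add: algebra_simps)
      finally show ?thesis using True Op1 by (simp add: hfe ps)
    next
      case False
      then show ?thesis using Op1 by (simp add: interact_def hf_def Let_def)
    qed
  next
    case Op2
    show ?thesis
    proof (cases "s j = Op1")
      case True
      have c1: "1 \<le> x2 n s" using cnt_pos[of i n s Op2, OF assms(1) Op2] .
      have e: "Phi n p A (s(i:=Und)) = (D + (1 - p))^2 + X - Y"
        using Phi_down[of n "s(i:=Und)" s p A] u1[of Und] u2[of Und] Op2 c1
        by (simp add: delta_w_def algebra_simps D_def X_def Y_def)
      have "measure_pmf.expectation (interact p s i j) (Phi n p A) = Phi n p A (s(i:=Und))"
        using Op2 True assms by (simp add: interact_def)
      then show ?thesis using e True Op2 by (simp add: hfe ps)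
    next
      case False
      then show ?thesis using Op2 by (simp add: interact_def hf_def Let_def)
    qed
  next
    case Und
    have ex: "measure_pmf.expectation (interact p s i j) (Phi n p A) = Phi n p A (s(i:=s j))"
      using Und by (simp add: interact_def)
    show ?thesis
    proof (cases "s j")
      case Op1
      have e: "Phi n p A (s(i:=Op1)) = (D + 1)^2 + X + Z"
        using Phi_up[of n "s(i:=Op1)" s p A] u1[of Op1] u2[of Op1] Und
        by (simp add: delta_w_def algebra_simps D_def X_def Z_def)
      then show ?thesis using ex Op1 Und by (simp add: hfe ps)
    next
      case Op2
      have e: "Phi n p A (s(i:=Op2)) = (D - (1 - p))^2 + X + Z"
        using Phi_up[of n "s(i:=Op2)" s p A] u1[of Op2] u2[of Op2] Und
        by (simp add: delta_w_def algebra_simps D_def X_def Z_def)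
      then show ?thesis using ex Op2 Und by (simp add: hfe ps)
    next
      case Und
      then show ?thesis using ex \<open>s i = Und\<close> by (simp add: hf_def Let_def fun_upd_idem)
    qed
  qed
qed

definition pairs :: "nat \<Rightarrow> (nat \<times> nat) set" where
  "pairs n = {(i, j). i < n \<and> j < n \<and> i \<noteq> j}"

lemma pairs_sub: "pairs n \<subseteq> {..<n} \<times> {..<n}" by (auto simp: pairs_def)
lemma pairs_fin: "finite (pairs n)" using pairs_sub finite_subset by blast
lemma pairs_ne: "2 \<le> n \<Longrightarrow> pairs n \<noteq> {}"
proof -
  assume "2 \<le> n"
  then have "(0, 1) \<in> pairs n" by (simp add: pairs_def)
  then show ?thesis by blast
qed
lemma pairs_card: "card (pairs n) \<le> n * n"
  using card_mono[OF _ pairs_sub] by (simp add: card_cartesian_product)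

lemma hf_diag: "hf n p A s \<alpha> \<alpha> = 0" by (cases \<alpha>) (simp_all add: hf_def Let_def)

lemma finite_interact: "finite (set_pmf (interact p s i j))"
  by (simp add: interact_def)

lemma sum_hf:
  "(\<Sum>x\<in>pairs n. hf n p A s (s (fst x)) (s (snd x))) =
    real (x1 n s) * real (x2 n s) * (hf n p A s Op1 Op2 + hf n p A s Op2 Op1)
    + real (und n s) * real (x1 n s) * hf n p A s Und Op1
    + real (und n s) * real (x2 n s) * hf n p A s Und Op2"
proof -
  let ?h = "hf n p A s"
  have "(\<Sum>x\<in>pairs n. ?h (s (fst x)) (s (snd x))) = (\<Sum>x\<in>{..<n} \<times> {..<n}. ?h (s (fst x)) (s (snd x)))"
    by (rule sum.mono_neutral_left) (auto simp: pairs_def hf_diag)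
  also have "\<dots> = (\<Sum>i<n. \<Sum>j<n. ?h (s i) (s j))"
    by (simp add: sum.cartesian_product case_prod_beta)
  also have "\<dots> = (\<Sum>i<n. real (x1 n s) * ?h (s i) Op1 + real (x2 n s) * ?h (s i) Op2 + real (und n s) * ?h (s i) Und)"
    by (simp add: sum_split)
  also have "\<dots> = real (x1 n s) * (real (x1 n s) * ?h Op1 Op1 + real (x2 n s) * ?h Op1 Op2 + real (und n s) * ?h Op1 Und)
     + real (x2 n s) * (real (x1 n s) * ?h Op2 Op1 + real (x2 n s) * ?h Op2 Op2 + real (und n s) * ?h Op2 Und)
     + real (und n s) * (real (x1 n s) * ?h Und Op1 + real (x2 n s) * ?h Und Op2 + real (und n s) * ?h Und Und)"
    by (subst sum_split[where g = "\<lambda>\<alpha>. real (x1 n s) * ?h \<alpha> Op1 + real (x2 n s) * ?h \<alpha> Op2 + real (und n s) * ?h \<alpha> Und"]) simp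
  also have "\<dots> = real (x1 n s) * real (x2 n s) * (?h Op1 Op2 + ?h Op2 Op1)
    + real (und n s) * real (x1 n s) * ?h Und Op1
    + real (und n s) * real (x2 n s) * ?h Und Op2"
    by (simp add: hf_diag algebra_simps) (simp add: hf_def Let_def)
  finally show ?thesis .
qed

lemma step_exp:
  assumes "2 \<le> n" "0 < p" "p < 1"
  shows "measure_pmf.expectation (usd_step n p s) (Phi n p A) = Phi n p A s +
    (real (x1 n s) * real (x2 n s) * (hf n p A s Op1 Op2 + hf n p A s Op2 Op1)
    + real (und n s) * real (x1 n s) * hf n p A s Und Op1
    + real (und n s) * real (x2 n s) * hf n p A s Und Op2) / real (card (pairs n))"
proof -
  have cp: "real (card (pairs n)) > 0" using pairs_ne[OF assms(1)] pairs_fin by (simp add: card_gt_0_iff)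
  have "measure_pmf.expectation (usd_step n p s) (Phi n p A) =
     (\<Sum>x\<in>pairs n. measure_pmf.expectation ((\<lambda>(i, j). interact p s i j) x) (Phi n p A) /\<^sub>R real (card (pairs n)))"
    unfolding usd_step_def pairs_def[symmetric]
    by (rule pmf_expectation_bind_pmf_of_set) (auto simp: pairs_ne assms pairs_fin finite_interact)
  also have "\<dots> = (\<Sum>x\<in>pairs n. (Phi n p A s + hf n p A s (s (fst x)) (s (snd x))) / real (card (pairs n)))"
    by (rule sum.cong) (auto simp: pairs_def pair_exp assms divide_inverse_commute)
  also have "\<dots> = (real (card (pairs n)) * Phi n p A s + (\<Sum>x\<in>pairs n. hf n p A s (s (fst x)) (s (snd x)))) / real (card (pairs n))"
    by (simp add: sum_divide_distrib[symmetric] sum.distrib)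
  also have "\<dots> = Phi n p A s + (\<Sum>x\<in>pairs n. hf n p A s (s (fst x)) (s (snd x))) / real (card (pairs n))"
    using cp by (simp add: field_simps)
  finally show ?thesis by (simp add: sum_hf)
qed

lemma main_ineq:
  fixes a b u q A N \<theta> :: real
  assumes ab: "0 \<le> a" "0 \<le> b" "0 \<le> u" and sum: "a + b + u = N" and d1: "1 \<le> a + b"
    and q: "0 < q" "q < 1" and A: "A = q / 4"
    and reg: "\<bar>a - q * b\<bar> < \<theta>" and th: "\<theta> \<le> q * N / 4"
  shows "q^2 / 128 * N^2 \<le>
     a * b * (q * ((a - q*b - 1)^2 - (a - q*b)^2 - A * N / (a + b))
              + ((a - q*b + q)^2 - (a - q*b)^2 - A * N / (a + b)))
     + u * a * ((a - q*b + 1)^2 - (a - q*b)^2 + A * N / (a + b + 1))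
     + u * b * ((a - q*b - q)^2 - (a - q*b)^2 + A * N / (a + b + 1))"
proof -
  define d where "d = a + b"
  define D where "D = a - q * b"
  define Y where "Y = A * N / d"
  define Z where "Z = A * N / (d + 1)"
  have dpos: "d > 0" using d1 d_def by simp
  have Yd: "Y * d = A * N" using dpos by (simp add: Y_def)
  have Zd: "Z * (d + 1) = A * N" using dpos by (simp add: Z_def field_simps)
  have N0: "N \<ge> d" using sum ab d_def by simp
  have A0: "A > 0" using A q by simp
  have Y0: "Y \<ge> 0" using A0 N0 dpos by (simp add: Y_def)
  have Z0: "Z \<ge> 0" using A0 N0 dpos by (simp add: Z_def)
  have iden: "a * b * (q * ((D - 1)^2 - D^2 - Y) + ((D + q)^2 - D^2 - Y))
     + u * a * ((D + 1)^2 - D^2 + Z) + u * b * ((D - q)^2 - D^2 + Z)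
     = a * b * (q^2 + q) - a * b * (1 + q) * Y + u * (a + b * q^2) + 2 * u * D^2 + u * d * Z"
    by (simp add: D_def d_def power2_eq_square algebra_simps)
  have abd: "a * b \<le> d^2 / 4"
  proof -
    have "(a - b)^2 \<ge> 0" by simp
    then have "a*a - 2*a*b + b*b \<ge> 0" by (simp add: power2_eq_square algebra_simps)
    then show ?thesis by (simp add: d_def power2_eq_square algebra_simps)
  qed
  have ab0: "a * b \<ge> 0" using ab by simp
  have t3: "u * (a + b * q^2) \<ge> q^2 * u * d"
  proof -
    have "q^2 \<le> 1" using q by (simp add: power_le_one)
    then have "b * q^2 \<ge> q^2 * b" by simp
    moreover have "a \<ge> q^2 * a" using \<open>q^2 \<le> 1\<close> ab by (simp add: mult_left_le_one_le)
    ultimately have "a + b * q^2 \<ge> q^2 * d" by (simp add: d_def algebra_simps)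
    then show ?thesis using ab(3) by (metis mult.assoc mult.commute mult_left_mono)
  qed
  have t4: "2 * u * D^2 \<ge> 0" using ab by simp
  have t5: "u * d * Z \<ge> 0" using ab dpos Z0 by simp
  have "q^2 / 128 * N^2 \<le> a * b * (q^2 + q) - a * b * (1 + q) * Y + u * (a + b * q^2) + 2 * u * D^2 + u * d * Z"
  proof (cases "d \<ge> N / 2")
    case True
    have "Y \<le> q / 2"
    proof -
      have "N * q \<le> (2 * d) * q" using True q by (intro mult_right_mono) auto
      then have "Y * d \<le> (q/2) * d" using Yd A by (simp add: field_simps)
      then show ?thesis using dpos by simp
    qed
    have eqa: "a * b * (q^2 + q) - a * b * (1 + q) * Y = (a * b * (1 + q)) * (q - Y)"
      by (simp add: power2_eq_square algebra_simps)
    have "(a * b * (1 + q)) * (q / 2) \<le> (a * b * (1 + q)) * (q - Y)"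
      using \<open>Y \<le> q / 2\<close> ab0 q by (intro mult_left_mono) auto
    then have m1: "a * b * (q^2 + q) - a * b * (1 + q) * Y \<ge> a * b * (1 + q) * (q / 2)"
      using eqa by simp
    have "0 \<le> a * (b * (q * q))" using ab q by simp
    then have m2: "a * b * (1 + q) * (q / 2) \<ge> a * b * q / 2" by (simp add: algebra_simps)
    have m3: "a * b \<ge> q * d^2 / 16"
    proof -
      have e1: "(1 + q) * a = q * d + D" by (simp add: d_def D_def algebra_simps)
      have e2: "(1 + q) * b = d - D" by (simp add: d_def D_def algebra_simps)
      have "q * N \<le> q * (2 * d)" using True q by (intro mult_left_mono) auto
      then have Dq: "\<bar>D\<bar> \<le> q * d / 2" using reg th D_def by simp
      have "q * d / 2 \<le> 1 * d / 2" using q dpos by (intro divide_right_mono mult_right_mono) auto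
      then have Dd: "\<bar>D\<bar> \<le> d / 2" using Dq by simp
      have f1: "q * d + D \<ge> q * d / 2" using Dq by linarith
      have f2: "d - D \<ge> d / 2" using Dd by linarith
      have "(q * d / 2) * (d / 2) \<le> (q * d + D) * (d - D)"
      proof -
        have g: "0 \<le> q * d / 2" using q dpos by simp
        show ?thesis by (rule mult_mono) (use f1 f2 g dpos in linarith)+
      qed
      also have "\<dots> = ((1 + q) * a) * ((1 + q) * b)" by (simp only: e1 e2)
      also have "\<dots> = (1 + q)^2 * (a * b)" by (simp add: power2_eq_square algebra_simps)
      also have "\<dots> \<le> 4 * (a * b)"
      proof -
        have "(1 + q)^2 \<le> 2^2" using q by (intro power_mono) auto
        then show ?thesis using ab0 by (intro mult_right_mono) auto
      qed
      finally show ?thesis by (simp add: power2_eq_square field_simps)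
    qed
    have m4: "q * d^2 / 16 * q / 2 \<ge> q^2 / 128 * N^2"
    proof -
      have "N^2 \<le> (2 * d)^2" using True N0 dpos sum ab d_def by (intro power_mono) auto
      then have "q^2 * N^2 \<le> q^2 * (2 * d)^2" by (intro mult_left_mono) auto
      then show ?thesis by (simp add: power2_eq_square field_simps)
    qed
    have m5: "a * b * q / 2 \<ge> q * d^2 / 16 * q / 2"
      using m3 q by (intro divide_right_mono mult_right_mono) auto
    show ?thesis using m1 m2 m4 m5 t3 t4 t5 q dpos ab(3) by (smt (verit) mult_nonneg_nonneg zero_le_power2)
  next
    case False
    have uN: "u = N - d" using sum d_def by simp
    have t2: "a * b * (1 + q) * Y \<le> d * A * N / 2"
    proof -
      have "a * b * (1 + q) * Y \<le> (d^2 / 4) * 2 * Y"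
        using abd ab0 q Y0 by (intro mult_right_mono mult_mono) auto
      also have "\<dots> = d * (Y * d) / 2" by (simp add: power2_eq_square)
      finally show ?thesis using Yd by (simp add: mult_ac)
    qed
    have t5': "u * d * Z \<ge> u * (A * N / 2)"
    proof -
      have "d * Z \<ge> A * N / 2"
      proof -
        have "d * Z = A * N - Z" using Zd by (simp add: algebra_simps)
        moreover have "Z \<le> A * N / 2"
        proof -
          have "Z * 2 \<le> Z * (d + 1)" using Z0 d1 d_def by (intro mult_left_mono) auto
          then show ?thesis using Zd by simp
        qed
        ultimately show ?thesis by simp
      qed
      then show ?thesis using ab(3) by (metis mult.assoc mult_left_mono)
    qed
    have t1: "a * b * (q^2 + q) \<ge> 0" using ab0 q by simp
    have low: "a * b * (q^2 + q) - a * b * (1 + q) * Y + u * (a + b * q^2) + 2 * u * D^2 + u * d * Z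
      \<ge> q^2 * u * d + A * N * (u - d) / 2"
    proof -
      have eq: "A * N * (u - d) / 2 = u * (A * N / 2) - d * A * N / 2" by (simp add: field_simps)
      show ?thesis using t1 t2 t3 t4 t5' eq by linarith
    qed
    show ?thesis
    proof (cases "d \<le> N / 4")
      case True
      have "A * N * (u - d) / 2 \<ge> A * N * (N / 2) / 2"
        using uN True A0 N0 dpos by (intro divide_right_mono mult_left_mono) auto
      moreover have "A * N * (N / 2) / 2 \<ge> q^2 / 128 * N^2"
      proof -
        have "q^2 \<le> q" using q by (simp add: power2_eq_square mult_left_le_one_le)
        then have h: "q*q*(N*N) \<le> q*(N*N)" by (intro mult_right_mono) (auto simp: power2_eq_square)
        have "A * N * (N / 2) / 2 = q * (N*N) / 16" using A by simp
        moreover have "q^2 / 128 * N^2 = q*q*(N*N) / 128" by (simp add: power2_eq_square)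
        moreover have "q * (N*N) \<ge> 0" using q by simp
        ultimately show ?thesis using h by linarith
      qed
      moreover have "q^2 * u * d \<ge> 0" using ab dpos by simp
      ultimately show ?thesis using low by linarith
    next
      case False2: False
      have "q^2 * u * d \<ge> q^2 * (N / 2) * (N / 4)"
        using False False2 uN q by (intro mult_mono mult_left_mono) auto
      moreover have "A * N * (u - d) / 2 \<ge> 0" using A0 N0 dpos uN False by simp
      moreover have "q^2 * (N / 2) * (N / 4) \<ge> q^2 / 128 * N^2"
      proof -
        have "q^2 * (N / 2) * (N / 4) = q^2 * N^2 / 8" by (simp add: power2_eq_square)
        moreover have "q^2 * N^2 \<ge> 0" by simp
        ultimately show ?thesis by linarith
      qed
      ultimately show ?thesis using low by linarith
    qed
  qed
  then show ?thesis using iden by (simp add: D_def d_def Y_def Z_def)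
qed

lemma ln_le_2sqrt: "x > 0 \<Longrightarrow> ln x \<le> 2 * sqrt (x::real)"
proof -
  assume x: "x > 0"
  have "ln (sqrt x) \<le> sqrt x - 1" using x by (intro ln_le_minus_one) auto
  moreover have "ln (sqrt x) = ln x / 2" using x by (simp add: ln_sqrt)
  ultimately show ?thesis by linarith
qed

lemma ev_bound:
  fixes \<xi> q :: real assumes q: "q > 0" and xi: "\<xi> > 0"
  shows "\<exists>N1. \<forall>n::nat \<ge> N1. \<xi> * sqrt (real n * ln (real n)) \<le> q * real n / 4"
proof -
  define c where "c = q^2 / (16 * \<xi>^2)"
  have c: "c > 0" using q xi by (simp add: c_def)
  show ?thesis
  proof (intro exI[of _ "nat \<lceil>4 / c^2\<rceil> + 1"] allI impI)
    fix n :: nat assume n: "nat \<lceil>4 / c^2\<rceil> + 1 \<le> n"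
    then have n1: "real n \<ge> 1" by simp
    have "real n \<ge> 4 / c^2" using n by linarith
    then have "sqrt (real n) \<ge> sqrt (4 / c^2)" by simp
    moreover have "sqrt (4 / c^2) = 2 / c" using c by (simp add: real_sqrt_divide)
    ultimately have s: "sqrt (real n) \<ge> 2 / c" by simp
    have sp: "sqrt (real n) > 0" using n1 by simp
    have "2 * sqrt (real n) \<le> c * real n"
    proof -
      have "2 \<le> c * sqrt (real n)" using s c by (simp add: field_simps)
      then have "2 * sqrt (real n) \<le> c * sqrt (real n) * sqrt (real n)"
        using sp by (intro mult_right_mono) auto
      also have "\<dots> = c * real n" using n1 by (simp add: mult.assoc)
      finally show ?thesis .
    qed
    then have lnb: "ln (real n) \<le> c * real n" using ln_le_2sqrt[of "real n"] n1 by linarith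
    have ln0: "ln (real n) \<ge> 0" using n1 by simp
    have "\<xi>^2 * (real n * ln (real n)) \<le> \<xi>^2 * (real n * (c * real n))"
      using lnb n1 by (intro mult_left_mono) auto
    also have "\<dots> = (q * real n / 4)^2" using xi by (simp add: c_def power2_eq_square field_simps)
    finally have "sqrt (\<xi>^2 * (real n * ln (real n))) \<le> sqrt ((q * real n / 4)^2)"
      by (simp only: real_sqrt_le_iff)
    then show "\<xi> * sqrt (real n * ln (real n)) \<le> q * real n / 4"
      using xi q n1 by (simp add: real_sqrt_mult)
  qed
qed

lemma succ_props:
  assumes "i < n" "j < n" "i \<noteq> j" "0 < p" "p < 1" "s' \<in> set_pmf (interact p s i j)"
  shows "\<bar>delta_w n p s' - delta_w n p s\<bar> \<le> 1 \<and> (1 \<le> x1 n s + x2 n s \<longrightarrow> 1 \<le> x1 n s' + x2 n s')"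
proof -
  have u1: "real (x1 n (s(i:=v))) = real (x1 n s) - (if s i = Op1 then 1 else 0) + (if v = Op1 then 1 else 0)" for v
    using cnt_upd[OF assms(1)] by blast
  have u2: "real (x2 n (s(i:=v))) = real (x2 n s) - (if s i = Op2 then 1 else 0) + (if v = Op2 then 1 else 0)" for v
    using cnt_upd[OF assms(1)] by blast
  consider (same) "s' = s" | (c12) "s i = Op1" "s j = Op2" "s' = s(i:=Und)" | (c21) "s i = Op2" "s j = Op1" "s' = s(i:=Und)"
    | (cu) "s i = Und" "s' = s(i := s j)"
    using assms(6) by (cases "s i"; cases "s j") (auto simp: interact_def fun_upd_def split: if_splits)
  then show ?thesis
  proof cases
    case same then show ?thesis by simp
  next
    case c12
    have "1 \<le> x2 n s" using cnt_pos[of j n s Op2] assms c12 by simp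
    then show ?thesis using u1[of Und] u2[of Und] c12 assms by (simp add: delta_w_def)
  next
    case c21
    have "1 \<le> x1 n s" using cnt_pos[of j n s Op1] assms c21 by simp
    have e1: "real (x1 n s') = real (x1 n s)" using u1[of Und] c21 by simp
    have e2: "real (x2 n s') = real (x2 n s) - 1" using u2[of Und] c21 by simp
    have "delta_w n p s' = delta_w n p s + (1 - p)"
      unfolding delta_w_def e1 e2 by (simp add: algebra_simps)
    then show ?thesis using \<open>1 \<le> x1 n s\<close> e1 assms by simp
  next
    case cu
    show ?thesis
    proof (cases "s j")
      case Op1 then show ?thesis using u1[of Op1] u2[of Op1] cu assms by (simp add: delta_w_def)
    next
      case Op2
      have e1: "real (x1 n s') = real (x1 n s)" using u1[of Op2] cu Op2 by simp
      have e2: "real (x2 n s') = real (x2 n s) + 1" using u2[of Op2] cu Op2 by simp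
      have "delta_w n p s' = delta_w n p s - (1 - p)"
        unfolding delta_w_def e1 e2 by (simp add: algebra_simps)
      moreover have "real (x1 n s') + real (x2 n s') \<ge> 1" using e1 e2 by simp
      ultimately show ?thesis using assms by simp
    next
      case Und then show ?thesis using cu by (simp add: fun_upd_idem)
    qed
  qed
qed

definition Iset :: "nat \<Rightarrow> real \<Rightarrow> real \<Rightarrow> config set" where
  "Iset n p \<theta> = {s. 1 \<le> x1 n s + x2 n s \<and> \<bar>delta_w n p s\<bar> < \<theta> + 1}"

lemma usd_fin: "2 \<le> n \<Longrightarrow> finite (set_pmf (usd_step n p s))"
  unfolding usd_step_def pairs_def[symmetric]
  by (auto simp: pairs_fin pairs_ne finite_interact)

lemma usd_succ:
  assumes "2 \<le> n" "0 < p" "p < 1" "s' \<in> set_pmf (usd_step n p s)"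
  shows "\<bar>delta_w n p s' - delta_w n p s\<bar> \<le> 1 \<and> (1 \<le> x1 n s + x2 n s \<longrightarrow> 1 \<le> x1 n s' + x2 n s')"
proof -
  from assms(4) obtain i j where "(i, j) \<in> pairs n" "s' \<in> set_pmf (interact p s i j)"
    unfolding usd_step_def pairs_def[symmetric] using pairs_fin pairs_ne[OF assms(1)] by auto
  then show ?thesis using succ_props assms by (auto simp: pairs_def)
qed

lemma chain_inst:
  assumes "2 \<le> n" "0 < p" "p < 1" "0 \<le> \<xi>"
  shows "chain (stopped (hit_set n p \<xi>) (usd_step n p)) (Iset n p (\<xi> * sqrt (real n * ln (real n)))) (hit_set n p \<xi>)"
proof
  fix s show "finite (set_pmf (stopped (hit_set n p \<xi>) (usd_step n p) s))"
    using usd_fin[OF assms(1)] by (simp add: stopped_def)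
next
  fix s assume "s \<in> hit_set n p \<xi>"
  then show "stopped (hit_set n p \<xi>) (usd_step n p) s = return_pmf s" by (simp add: stopped_def)
next
  fix s assume sI: "s \<in> Iset n p (\<xi> * sqrt (real n * ln (real n)))"
  show "set_pmf (stopped (hit_set n p \<xi>) (usd_step n p) s) \<subseteq> Iset n p (\<xi> * sqrt (real n * ln (real n)))"
  proof (cases "s \<in> hit_set n p \<xi>")
    case True then show ?thesis using sI by (simp add: stopped_def)
  next
    case False
    then have "\<bar>delta_w n p s\<bar> < \<xi> * sqrt (real n * ln (real n))" by (simp add: hit_set_def)
    then show ?thesis using False sI usd_succ[OF assms(1-3)]
      by (fastforce simp: stopped_def Iset_def)
  qed
qed

lemma drift_inst:
  assumes n: "2 \<le> n" and p: "0 < p" "p < 1" and sI: "s \<in> Iset n p \<theta>" and sH: "s \<notin> hit_set n p \<xi>"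
    and th: "\<theta> = \<xi> * sqrt (real n * ln (real n))" and thb: "\<theta> \<le> (1 - p) * real n / 4"
  shows "measure_pmf.expectation (stopped (hit_set n p \<xi>) (usd_step n p) s) (Phi n p ((1 - p) / 4))
     \<ge> Phi n p ((1 - p) / 4) s + (1 - p)^2 / 128"
proof -
  let ?q = "1 - p" and ?A = "(1 - p) / 4"
  let ?a = "real (x1 n s)" and ?b = "real (x2 n s)" and ?u = "real (und n s)"
  define Tot where "Tot = ?a * ?b * (hf n p ?A s Op1 Op2 + hf n p ?A s Op2 Op1)
    + ?u * ?a * hf n p ?A s Und Op1 + ?u * ?b * hf n p ?A s Und Op2"
  have ex: "measure_pmf.expectation (stopped (hit_set n p \<xi>) (usd_step n p) s) (Phi n p ?A)
     = Phi n p ?A s + Tot / real (card (pairs n))"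
    using sH step_exp[OF n p, of s ?A] by (simp add: stopped_def Tot_def)
  have tot_eq: "Tot = ?a * ?b * (?q * ((?a - ?q * ?b - 1)^2 - (?a - ?q * ?b)^2 - ?A * real n / (?a + ?b))
              + ((?a - ?q * ?b + ?q)^2 - (?a - ?q * ?b)^2 - ?A * real n / (?a + ?b)))
     + ?u * ?a * ((?a - ?q * ?b + 1)^2 - (?a - ?q * ?b)^2 + ?A * real n / (?a + ?b + 1))
     + ?u * ?b * ((?a - ?q * ?b - ?q)^2 - (?a - ?q * ?b)^2 + ?A * real n / (?a + ?b + 1))"
    unfolding Tot_def by (simp add: hf_def Let_def delta_w_def)
  have tot: "(1 - p)^2 / 128 * (real n)^2 \<le> Tot"
    unfolding tot_eq
  proof (rule main_ineq[where \<theta> = \<theta>])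
    show "?a + ?b + ?u = real n" using cnt_total[of n s] by (metis of_nat_add)
    show "1 \<le> ?a + ?b" using sI by (simp add: Iset_def)
    show "\<bar>?a - ?q * ?b\<bar> < \<theta>" using sH th by (simp add: hit_set_def delta_w_def)
    show "\<theta> \<le> ?q * real n / 4" using thb .
  qed (use p in auto)
  have cp: "0 < real (card (pairs n))" using pairs_ne[OF n] pairs_fin by (simp add: card_gt_0_iff)
  have cle: "real (card (pairs n)) \<le> (real n)^2"
    using pairs_card[of n] by (simp add: power2_eq_square of_nat_mult[symmetric] del: of_nat_mult)
  have "(1 - p)^2 / 128 * real (card (pairs n)) \<le> (1 - p)^2 / 128 * (real n)^2"
    using cle by (intro mult_left_mono) auto
  then have "(1 - p)^2 / 128 * real (card (pairs n)) \<le> Tot" using tot by linarith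
  then have "(1 - p)^2 / 128 \<le> Tot / real (card (pairs n))" using cp by (simp add: field_simps)
  then show ?thesis using ex by simp
qed

lemma Phi_bounds:
  assumes "1 \<le> n" "0 < p" "p < 1" "s \<in> Iset n p \<theta>"
  shows "0 \<le> Phi n p ((1 - p) / 4) s \<and> Phi n p ((1 - p) / 4) s \<le> (\<theta> + 1)^2 + (1 - p) / 4 * real n * (1 + ln (real n))"
proof -
  have h0: "0 \<le> (harm (x1 n s + x2 n s) :: real)" by (rule harm_nonneg)
  have "x1 n s + x2 n s \<le> n" using cnt_total[of n s] by linarith
  then have "(harm (x1 n s + x2 n s) :: real) \<le> harm n" by (rule harm_mono)
  also have "\<dots> \<le> 1 + ln (real n)" using assms(1) by (rule harm_le_ln)
  finally have h1: "(harm (x1 n s + x2 n s) :: real) \<le> 1 + ln (real n)" .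
  have d: "\<bar>delta_w n p s\<bar> < \<theta> + 1" using assms(4) by (simp add: Iset_def)
  then have d2: "(delta_w n p s)^2 \<le> (\<theta> + 1)^2"
    by (metis abs_ge_zero abs_le_square_iff less_imp_le order_trans power2_abs abs_of_nonneg abs_le_iff less_le_trans)
  have A0: "0 \<le> (1 - p) / 4 * real n" using assms by simp
  have "(1 - p) / 4 * real n * harm (x1 n s + x2 n s) \<le> (1 - p) / 4 * real n * (1 + ln (real n))"
    using h1 A0 by (rule mult_left_mono)
  moreover have "0 \<le> (1 - p) / 4 * real n * harm (x1 n s + x2 n s)" using A0 h0 by simp
  ultimately show ?thesis using d2 by (simp add: Phi_def)
qed

lemma ln2_half: "ln (2::real) \<ge> 1/2"
proof -
  have "ln (1/2::real) \<le> 1/2 - 1" by (intro ln_le_minus_one) auto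
  then show ?thesis by (simp add: ln_div)
qed

lemma nat_ceil_le: "0 \<le> (x::real) \<Longrightarrow> real (nat \<lceil>x\<rceil>) \<le> x + 1"
proof -
  assume x: "0 \<le> x"
  then have "0 \<le> \<lceil>x\<rceil>" by simp
  then have "real (nat \<lceil>x\<rceil>) = real_of_int \<lceil>x\<rceil>" by simp
  then show ?thesis using ceiling_correct[of x] by linarith
qed

lemma nat_ceil_ge: "(x::real) \<le> real (nat \<lceil>x\<rceil>)"
  by (metis le_of_int_ceiling of_nat_nat nat_0_le linorder_le_cases of_int_le_iff le_nat_iff ceiling_le_zero order_trans of_nat_0_le_iff)

lemma le_nat_floor': "real m \<le> (x::real) \<Longrightarrow> m \<le> nat \<lfloor>x\<rfloor>"
  by (simp add: le_nat_floor)

theorem lemma4: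
  fixes \<epsilon> p \<xi> :: real
  assumes "0 < \<epsilon>" "\<epsilon> \<le> 1" "0 < p" "p < 1" "0 < \<xi>"
  shows "\<exists>C > 0. \<exists>c > 0. \<exists>n0. \<forall>n \<ge> n0. \<forall>s0 :: config.
           \<epsilon> * real n \<le> real (x1 n s0) \<and> x1 n s0 \<le> x2 n s0 \<and>
           real (und n s0) \<le> real n / 2 \<and>
           \<bar>delta_w n p s0\<bar> < \<xi> * sqrt (real n * ln (real n)) \<longrightarrow>
           prob_not_hit n p \<xi> (nat \<lfloor>C * real n * (ln (real n))\<^sup>2\<rfloor>) s0 \<le> real n powr (- c)"
proof -
  note p = assms(3,4)
  define q where "q = 1 - p"
  have q: "0 < q" "q < 1" using p by (auto simp: q_def)
  define \<delta> where "\<delta> = q^2 / 128"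
  have \<delta>: "\<delta> > 0" using q by (simp add: \<delta>_def)
  define Kc where "Kc = 2 * \<xi>^2 + 2 + 2 * (q / 4)"
  have "0 \<le> 2 * \<xi>^2" by simp
  then have Kc: "Kc > 0" using q unfolding Kc_def by linarith
  define C where "C = 3 * (2 * Kc / \<delta> + 1)"
  have "2 * Kc / \<delta> > 0" using Kc \<delta> by simp
  then have Cpos: "C > 0" unfolding C_def by (intro mult_pos_pos add_pos_pos) auto
  obtain N1 where N1: "\<And>n::nat. n \<ge> N1 \<Longrightarrow> \<xi> * sqrt (real n * ln (real n)) \<le> q * real n / 4"
    using ev_bound[OF q(1) assms(5)] by blast
  have main: "prob_not_hit n p \<xi> (nat \<lfloor>C * real n * (ln (real n))\<^sup>2\<rfloor>) s0 \<le> real n powr (- 1)"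
    if n: "n \<ge> max 3 N1" and pre: "\<epsilon> * real n \<le> real (x1 n s0)"
      "\<bar>delta_w n p s0\<bar> < \<xi> * sqrt (real n * ln (real n))" for n s0
  proof -
    have n3: "real n \<ge> 3" "n \<ge> 2" using n by auto
    have ln1: "ln (real n) \<ge> 1"
    proof -
      have "exp 1 \<le> real n" using exp_le n3 by linarith
      then have "ln (exp 1) \<le> ln (real n)" using n3 by (subst ln_le_cancel_iff) auto
      then show ?thesis by simp
    qed
    define m where "m = real n * ln (real n)"
    have m1: "m \<ge> real n" using ln1 n3 by (simp add: m_def)
    define \<theta> where "\<theta> = \<xi> * sqrt m"
    have th0: "\<theta> \<ge> 0" using assms(5) m1 n3 by (simp add: \<theta>_def)
    have thb: "\<theta> \<le> (1 - p) * real n / 4" using N1[of n] n by (simp add: \<theta>_def m_def q_def)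
    have th2: "\<theta>^2 = \<xi>^2 * m" using m1 n3 by (simp add: \<theta>_def power_mult_distrib)
    define K where "K = stopped (hit_set n p \<xi>) (usd_step n p)"
    define I where "I = Iset n p (\<xi> * sqrt (real n * ln (real n)))"
    define H where "H = hit_set n p \<xi>"
    interpret ch: chain K I H
      unfolding K_def I_def H_def by (rule chain_inst) (use n3 p assms(5) in auto)
    define B where "B = (\<theta> + 1)^2 + (1 - p) / 4 * real n * (1 + ln (real n))"
    have Bpos: "B > 0" using th0 p ln1 n3 by (simp add: B_def add_pos_nonneg)
    have BK: "B \<le> Kc * m"
    proof -
      have "(\<theta> + 1)^2 = \<theta>^2 + 2 * \<theta> + 1" "(\<theta> - 1)^2 = \<theta>^2 - 2 * \<theta> + 1"
        by (simp_all add: power2_eq_square algebra_simps)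
      moreover have "0 \<le> (\<theta> - 1)^2" by simp
      ultimately have "(\<theta> + 1)^2 \<le> 2 * \<theta>^2 + 2" by linarith
      also have "\<dots> \<le> 2 * \<xi>^2 * m + 2 * m" using th2 m1 n3 by simp
      finally have a1: "(\<theta> + 1)^2 \<le> 2 * \<xi>^2 * m + 2 * m" .
      have "(1 - p) / 4 * real n * (1 + ln (real n)) = q / 4 * (real n + m)"
        by (simp add: q_def m_def field_simps)
      also have "\<dots> \<le> q / 4 * (2 * m)" using m1 q by (intro mult_left_mono) auto
      finally have a2: "(1 - p) / 4 * real n * (1 + ln (real n)) \<le> 2 * (q / 4) * m" by (simp add: mult_ac)
      have "Kc * m = 2 * \<xi>^2 * m + 2 * m + 2 * (q / 4) * m" by (simp add: Kc_def algebra_simps)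
      then show ?thesis using a1 a2 unfolding B_def by linarith
    qed
    define L where "L = nat \<lceil>2 * B / \<delta>\<rceil>"
    have L1: "real L \<ge> 2 * B / \<delta>" unfolding L_def by (rule nat_ceil_ge)
    have L2: "real L \<le> 2 * B / \<delta> + 1" unfolding L_def using Bpos \<delta> by (intro nat_ceil_le) simp
    have half: "measure_pmf.prob (run K L s) (-H) \<le> 1/2" if sI: "s \<in> I" for s
    proof -
      have db: "real L * \<delta> * measure_pmf.prob (run K L s) (-H) \<le> B"
      proof (rule ch.drift_bound[where \<Phi> = "Phi n p ((1 - p) / 4)"])
        show "\<And>s. s \<in> I \<Longrightarrow> 0 \<le> Phi n p ((1 - p) / 4) s \<and> Phi n p ((1 - p) / 4) s \<le> B"
          unfolding I_def B_def \<theta>_def m_def using Phi_bounds n3 p by auto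
        show "\<And>s. s \<in> I \<Longrightarrow> s \<notin> H \<Longrightarrow> Phi n p ((1 - p) / 4) s + \<delta> \<le> measure_pmf.expectation (K s) (Phi n p ((1 - p) / 4))"
          unfolding I_def H_def K_def \<delta>_def q_def
          by (rule drift_inst) (use n3 p thb in \<open>auto simp: \<theta>_def m_def\<close>)
      qed (use \<delta> sI in auto)
      define P where "P = measure_pmf.prob (run K L s) (-H)"
      have P0: "P \<ge> 0" by (simp add: P_def)
      have "2 * B \<le> real L * \<delta>" using L1 \<delta> by (simp add: field_simps)
      then have "2 * B * P \<le> real L * \<delta> * P" using P0 by (intro mult_right_mono) auto
      then have "2 * B * P \<le> B" using db by (simp add: P_def)
      then have "B * (2 * P) \<le> B * 1" by (simp add: mult_ac)
      then have "2 * P \<le> 1" using Bpos by (simp only: mult_le_cancel_left_pos)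
      then show ?thesis by (simp add: P_def)
    qed
    have s0I: "s0 \<in> I"
    proof -
      have "\<epsilon> * real n > 0" using assms(1) n3 by simp
      then have "real (x1 n s0) > 0" using pre(1) by linarith
      then have "1 \<le> x1 n s0 + x2 n s0" by simp
      then show ?thesis using pre(2) by (simp add: I_def Iset_def)
    qed
    define k where "k = nat \<lceil>log 2 (real n)\<rceil>"
    have rk: "measure_pmf.prob (run K (k * L) s0) (-H) \<le> (1/2)^k"
      using ch.rounds[OF half s0I] .
    have logpos: "log 2 (real n) \<ge> 0" using n3 by simp
    have k1: "real k \<ge> log 2 (real n)" unfolding k_def by (rule nat_ceil_ge)
    have k2: "real k \<le> log 2 (real n) + 1" unfolding k_def using logpos by (rule nat_ceil_le)
    have pk: "(1/2::real)^k \<le> 1 / real n"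
    proof -
      have "real n = 2 powr (log 2 (real n))" using n3 by simp
      also have "\<dots> \<le> 2 powr (real k)" using k1 by (intro powr_mono) auto
      also have "\<dots> = 2 ^ k" by (simp add: powr_realpow)
      finally have "real n \<le> 2 ^ k" .
      then show ?thesis using n3 by (simp add: power_one_over field_simps)
    qed
    define t where "t = nat \<lfloor>C * real n * (ln (real n))\<^sup>2\<rfloor>"
    have kLt: "k * L \<le> t"
    proof -
      have lg: "log 2 (real n) \<le> 2 * ln (real n)"
      proof -
        have "log 2 (real n) = ln (real n) / ln 2" by (simp add: log_def)
        also have "\<dots> \<le> ln (real n) / (1/2)" using ln2_half ln1 by (intro divide_left_mono) auto
        finally show ?thesis by simp
      qed
      have f1: "real k \<le> 3 * ln (real n)" using k2 lg ln1 by linarith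
      have f2: "real L \<le> (2 * Kc / \<delta> + 1) * m"
      proof -
        have "2 * B / \<delta> \<le> 2 * (Kc * m) / \<delta>" using BK \<delta> by (intro divide_right_mono) auto
        then have "real L \<le> 2 * Kc / \<delta> * m + 1" using L2 by simp
        also have "\<dots> \<le> 2 * Kc / \<delta> * m + m" using m1 n3 by simp
        finally show ?thesis by (simp add: algebra_simps)
      qed
      have "real (k * L) = real k * real L" by simp
      also have "\<dots> \<le> (3 * ln (real n)) * ((2 * Kc / \<delta> + 1) * m)"
        using f1 f2 by (intro mult_mono) auto
      also have "\<dots> = C * real n * (ln (real n))\<^sup>2" by (simp add: C_def m_def power2_eq_square algebra_simps)
      finally have "real (k * L) \<le> C * real n * (ln (real n))\<^sup>2" .
      then show ?thesis unfolding t_def by (rule le_nat_floor')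
    qed
    have "prob_not_hit n p \<xi> t s0 = measure_pmf.prob (run K t s0) (-H)"
      by (simp add: prob_not_hit_def K_def H_def)
    also have "\<dots> \<le> measure_pmf.prob (run K (k * L) s0) (-H)" using ch.P_mono[OF kLt] .
    also have "\<dots> \<le> 1 / real n" using rk pk by linarith
    also have "\<dots> = real n powr (- 1)" using n3 by (simp add: powr_minus_divide)
    finally show ?thesis by (simp add: t_def)
  qed
  show ?thesis
    apply (rule exI[of _ C])
    apply (intro conjI Cpos)
    apply (rule exI[of _ 1])
    apply (intro conjI)
     apply simp
    apply (rule exI[of _ "max 3 N1"])
    using main by auto
qed

end
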